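(* Let $A\in\mathbb{R}^{n\times n}$, $B\in\mathbb{R}^{n\times m}$, $C\in\mathbb{R}^{p\times n}$ and let $\mathscr{G}$ be a weighted directed graph on $N$ nodes with Laplacian $\mathcal{L}$, and consider the dynamic network $(A,B,C,\mathscr{G})$ described in the context. Let $L_{G}=+\infty$, $L_{K}=+\infty$ and $\varrho=1$. Suppose that for any given positive constants $C_{x}$, $C_{\hat{x}}$, $C_{\hat{u}}$ there exist a communication protocol $H(\gamma,\alpha,\alpha_{u},L,L_{u},G)\in\mathscr{H}(\varrho,L_{G})$ and a control protocol $U(K)\in\mathscr{U}(L_{K})$ such that for any initial conditions with $\|X(0)\|_\infty<C_{x}$, $\|\hat{X}(0)\|_\infty<C_{\hat{x}}$ and $\|\hat{U}(0)\|_\infty<C_{\hat{u}}$, the closed-loop network achieves cooperative stabilization under $H$ and $U$, i.e. $\lim_{t\to\infty}(x_j(t)-x_i(t))=0$ for all $i,j=1,\dots,N$. Then $(A,B)$ is stabilizable.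
   Context: Agents $i=1,\dots,N$ have dynamics $x_i(t+1)=Ax_i(t)+Bu_i(t)$, $y_i(t)=Cx_i(t)$, $t=0,1,\dots$. The communication graph $\mathscr{G}$ has node set $\{1,\dots,N\}$ and weighted adjacency matrix $\mathscr{A}=[a_{ij}]$ with $a_{ii}=0$, $a_{ij}\ge0$, and $a_{ij}>0$ iff there is a channel from $j$ to $i$; $N_i=\{j: a_{ij}>0\}$. The Laplacian is $\mathcal{L}=\mathrm{diag}(\sum_j a_{1j},\dots,\sum_j a_{Nj})-\mathscr{A}$. Norms: for a vector, $\|\cdot\|_\infty$ is the max norm; for a matrix, $\|\cdot\|$ is the spectral (Euclidean operator) norm. Quantizer: for $p\in(0,1]$ and a positive integer $M$, $Q_{p,M}(y)=ip$ if $ip-p/2\le y<ip+p/2$, $i=0,1,\dots,M-1$; $Q_{p,M}(y)=Mp$ if $y\ge Mp-p/2$; $Q_{p,M}(y)=-Q_{p,M}(-y)$ if $y<-p/2$; applied componentwise to vectors. Communication protocol set: for $\varrho\in(0,1]$ and $L_G\in\mathbb{R}^+\cup\{+\infty\}$, $\mathscr{H}(\varrho,L_G)$ consists of protocols $H(\gamma,\alpha,\alpha_u,L,L_u,G)$ with $\gamma\in(0,\varrho)$, $\alpha,\alpha_u\in(0,1]$, positive integers $L,L_u$, and $G\in\mathbb{R}^{n\times p}$ with $\|G\|<L_G$. Under such a protocol, each agent $j$ runs the encoder: $\hat x_j(0)=\hat x_{j0}$, $\hat u_j(0)=\hat u_{j0}$, and for $t\ge1$: $s_j(t)=Q_{\alpha,L}\big((y_j(t-1)-C\hat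 x_j(t-1))/\gamma^{t-1}\big)$, $\hat x_j(t)=A\hat x_j(t-1)+\gamma^{t-1}Gs_j(t)+B\hat u_j(t-1)$, $s_{u,j}(t)=Q_{\alpha_u,L_u}\big((u_j(t)-\hat u_j(t-1))/\gamma^{t-1}\big)$, $\hat u_j(t)=\hat u_j(t-1)+\gamma^{t-1}s_{u,j}(t)$; the symbols $s_j(t),s_{u,j}(t)$ are sent over each channel $(j,i)$, and receiver $i$ runs the decoder $\hat x_{ji}(0)=\hat x_{j0}$, $\hat u_{ji}(0)=\hat u_{j0}$, $\hat x_{ji}(t)=A\hat x_{ji}(t-1)+\gamma^{t-1}Gs_j(t)+B\hat u_{ji}(t-1)$, $\hat u_{ji}(t)=\hat u_{ji}(t-1)+\gamma^{t-1}s_{u,j}(t)$ (so $\hat x_{ji}(t)=\hat x_j(t)$). Control protocol set: for $L_K\in\mathbb{R}^+\cup\{+\infty\}$, $\mathscr{U}(L_K)$ consists of protocols $U(K)$, $K\in\mathbb{R}^{m\times n}$ with $\|K\|<L_K$, given by $u_i(t)=K\sum_{j\in N_i}a_{ij}(\hat x_{ji}(t)-\hat x_i(t))$, $t\ge0$. Stacked vectors: $X(t)=(x_1^T(t),\dots,x_N^T(t))^T$, $\hat X(t)=(\hat x_1^T(t),\dots,\hat x_N^T(t))^T$, $\hat U(t)=(\hat u_1^T(t),\dots,\hat u_N^T(t))^T$. *)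

theory Defs
  imports "HOL-Analysis.Analysis"
begin

text \<open>Uniform quantizer Q_{p,M} on reals, written out as in the paper:
  for y >= -p/2 it returns i p with i p - p/2 <= y < i p + p/2 (i = 0..M-1),
  saturating at M p; for y < -p/2 it is odd-symmetric.\<close>
definition quant_nonneg :: "real \<Rightarrow> nat \<Rightarrow> real \<Rightarrow> real" where
  "quant_nonneg p M y =
     (if y \<ge> real M * p - p / 2 then real M * p
      else p * of_int \<lfloor>y / p + 1 / 2\<rfloor>)"

definition quant :: "real \<Rightarrow> nat \<Rightarrow> real \<Rightarrow> real" where
  "quant p M y = (if y < - p / 2 then - quant_nonneg p M (- y) else quant_nonneg p M y)"

definition vquant :: "real \<Rightarrow> nat \<Rightarrow> real ^ 'k \<Rightarrow> real ^ 'k" where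
  "vquant p M v = (\<chi> k. quant p M (v $ k))"

text \<open>Trajectories are indexed by time first, then agent:
  x t i = x_i(t), xh t j = hat x_j(t), uh t j = hat u_j(t), s t j = s_j(t),
  su t j = s_{u,j}(t), xd t i j = hat x_{ji}(t) (decoder of j's signal at i),
  ud t i j = hat u_{ji}(t), u t i = u_i(t).\<close>
definition closed_loop ::
  "real^'n^'n \<Rightarrow> real^'m^'n \<Rightarrow> real^'n^'p \<Rightarrow> ('N \<Rightarrow> 'N \<Rightarrow> real) \<Rightarrow>
   real \<Rightarrow> real \<Rightarrow> real \<Rightarrow> nat \<Rightarrow> nat \<Rightarrow> real^'p^'n \<Rightarrow> real^'n^'m \<Rightarrow>
   (nat \<Rightarrow> 'N \<Rightarrow> real^'n) \<Rightarrow> (nat \<Rightarrow> 'N \<Rightarrow> real^'n) \<Rightarrow> (nat \<Rightarrow> 'N \<Rightarrow> real^'m) \<Rightarrow>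
   (nat \<Rightarrow> 'N \<Rightarrow> real^'p) \<Rightarrow> (nat \<Rightarrow> 'N \<Rightarrow> real^'m) \<Rightarrow>
   (nat \<Rightarrow> 'N \<Rightarrow> 'N \<Rightarrow> real^'n) \<Rightarrow> (nat \<Rightarrow> 'N \<Rightarrow> 'N \<Rightarrow> real^'m) \<Rightarrow>
   (nat \<Rightarrow> 'N \<Rightarrow> real^'m) \<Rightarrow> bool" where
  "closed_loop A B C a \<gamma> \<alpha> \<alpha>u L Lu G K x xh uh s su xd ud u \<longleftrightarrow>
     \<comment> \<open>agent dynamics\<close>
     (\<forall>t i. x (Suc t) i = A *v x t i + B *v u t i) \<and>
     \<comment> \<open>encoder of agent j, t >= 1 (written with t+1)\<close>
     (\<forall>t j. s (Suc t) j = vquant \<alpha> L ((1 / \<gamma> ^ t) *\<^sub>R (C *v x t j - C *v xh t j))) \<and>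
     (\<forall>t j. xh (Suc t) j = A *v xh t j + (\<gamma> ^ t) *\<^sub>R (G *v s (Suc t) j) + B *v uh t j) \<and>
     (\<forall>t j. su (Suc t) j = vquant \<alpha>u Lu ((1 / \<gamma> ^ t) *\<^sub>R (u (Suc t) j - uh t j))) \<and>
     (\<forall>t j. uh (Suc t) j = uh t j + (\<gamma> ^ t) *\<^sub>R su (Suc t) j) \<and>
     \<comment> \<open>decoder at receiver i of the symbols sent by j\<close>
     (\<forall>i j. xd 0 i j = xh 0 j \<and> ud 0 i j = uh 0 j) \<and>
     (\<forall>t i j. xd (Suc t) i j = A *v xd t i j + (\<gamma> ^ t) *\<^sub>R (G *v s (Suc t) j) + B *v ud t i j) \<and>
     (\<forall>t i j. ud (Suc t) i j = ud t i j + (\<gamma> ^ t) *\<^sub>R su (Suc t) j) \<and>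
     \<comment> \<open>control protocol U(K), neighbours N_i = {j. a i j > 0}\<close>
     (\<forall>t i. u t i = K *v (\<Sum>j\<in>{j. a i j > 0}. a i j *\<^sub>R (xd t i j - xh t i)))"

text \<open>Eigenvalues of a real square matrix are taken over the complex numbers.\<close>
definition complexify :: "real^'n^'n \<Rightarrow> complex^'n^'n" where
  "complexify M = (\<chi> i j. complex_of_real (M $ i $ j))"

definition schur_stable :: "real^'n^'n \<Rightarrow> bool" where
  "schur_stable M \<longleftrightarrow>
     (\<forall>(ev::complex) (v::complex^'n). v \<noteq> 0 \<and> complexify M *v v = ev *s v \<longrightarrow> cmod ev < 1)"

definition stabilizable :: "real^'n^'n \<Rightarrow> real^'m^'n \<Rightarrow> bool" where
  "stabilizable A B \<longleftrightarrow> (\<exists>K::real^'n^'m. schur_stable (A + B ** K))"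

end

theory Submission
  imports Defs
begin


lemma inner_mv_transpose: "inner (x::real^'n) ((M::real^'m^'n) *v y) = inner (transpose M *v x) y"
  by (simp add: dot_lmul_matrix)

lemma inner_sym_mat: assumes "transpose S = S"
  shows "inner (x::real^'n) ((S::real^'n^'n) *v y) = inner y (S *v x)"
  by (metis assms inner_commute inner_mv_transpose)

lemma mvm: "((M::real^'n^'m) ** N) *v x = M *v (N *v x)"
  by (simp add: matrix_vector_mul_assoc)

lemma mv_uminus_right: "(M::real^'n^'m) *v (- x) = - (M *v x)"
  by (metis diff_0 matrix_vector_mult_0_right matrix_vector_mult_diff_distrib)

lemma mv_scaleR_left: "((c::real) *\<^sub>R (M::real^'n^'m)) *v z = c *\<^sub>R (M *v z)"
  by (simp add: vec_eq_iff matrix_vector_mult_def sum_distrib_left mult.assoc)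

lemma mv_uminus_left: "(- (M::real^'n^'m)) *v z = - (M *v z)"
  by (simp add: vec_eq_iff matrix_vector_mult_def sum_negf)

lemma transpose_add': "transpose ((M::real^'n^'m) + N) = transpose M + transpose N"
  by (simp add: transpose_def vec_eq_iff)

definition symm :: "real^'n^'n \<Rightarrow> real^'n^'n" where
  "symm M = (1/2) *\<^sub>R (M + transpose M)"

lemma symm_sym: "transpose (symm M) = symm M"
  by (simp add: symm_def transpose_scalar transpose_def add.commute vec_eq_iff)

lemma qf_symm: "inner z (symm M *v z) = inner z (M *v z)"
proof -
  have "inner z (transpose M *v z) = inner z (M *v z)"
    by (metis inner_commute inner_mv_transpose transpose_transpose)
  then show ?thesis
    by (simp add: symm_def mv_scaleR_left matrix_vector_mult_add_rdistrib inner_add_right del: transpose_matrix_vector)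
qed

lemma riccati_identity:
  fixes A::"real^'n^'n" and B::"real^'m^'n" and S::"real^'n^'n"
  assumes Ss: "transpose S = S" and RX: "(mat 1 + transpose B ** S ** B) ** X = mat 1"
  defines "K \<equiv> - (X ** transpose B ** S ** A)"
  shows "norm z^2 + norm v^2 + inner (A*v z + B*v v) (S *v (A*v z + B*v v)) =
     inner z ((mat 1 + transpose A ** S ** A + transpose A ** S ** B ** K) *v z)
     + inner (v - K *v z) ((mat 1 + transpose B ** S ** B) *v (v - K *v z))"
proof -
  define R where "R = mat 1 + transpose B ** S ** B"
  have Rs: "transpose R = R"
    unfolding R_def
    by (metis Ss matrix_transpose_mul matrix_mul_assoc transpose_add' transpose_mat transpose_transpose)
  define y where "y = transpose B *v (S *v (A *v z))"
  have Rw: "R *v w = w + transpose B *v (S *v (B *v w))" for w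
    by (simp add: R_def matrix_vector_mult_add_rdistrib mvm del: transpose_matrix_vector)
  have Kz: "K *v z = - (X *v y)"
    by (simp add: K_def y_def mv_uminus_left mvm del: transpose_matrix_vector)
  have RK: "R *v (K *v z) = - y"
  proof -
    have "R *v (X *v y) = y" by (metis RX R_def matrix_vector_mul_assoc matrix_vector_mul_lid)
    then show ?thesis by (simp add: Kz mv_uminus_right)
  qed
  define a where "a = A *v z"
  define b where "b = B *v v"
  define k where "k = K *v z"
  have e1: "inner z ((transpose A ** S ** A) *v z) = inner a (S *v a)"
    by (simp add: a_def mvm inner_mv_transpose[of z "transpose A"] del: transpose_matrix_vector)
  have e2: "inner z ((transpose A ** S ** B ** K) *v z) = inner k y"
  proof -
    have "inner z ((transpose A ** S ** B ** K) *v z) = inner a (S *v (B *v k))"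
      by (simp add: a_def k_def mvm inner_mv_transpose[of z "transpose A"] del: transpose_matrix_vector)
    also have "\<dots> = inner (B *v k) (S *v a)" using inner_sym_mat[OF Ss] by blast
    also have "\<dots> = inner k y" by (simp add: y_def a_def inner_mv_transpose[of "B *v k"] del: transpose_matrix_vector)
      (metis inner_commute inner_mv_transpose)
    finally show ?thesis .
  qed
  have e3: "inner (v - k) (R *v (v - k)) = inner v (R *v v) + 2 * inner v y - inner k y"
  proof -
    have "inner k (R *v v) = inner v (R *v k)" using inner_sym_mat[OF Rs] by blast
    then show ?thesis using RK unfolding k_def[symmetric]
      by (simp add: matrix_vector_mult_diff_distrib inner_diff_left inner_diff_right inner_add_right del: transpose_matrix_vector)
  qed
  have e4: "inner v (R *v v) = norm v ^2 + inner b (S *v b)"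
    by (simp add: Rw b_def inner_add_right power2_norm_eq_inner del: transpose_matrix_vector)
      (metis inner_commute inner_mv_transpose)
  have e5: "inner v y = inner b (S *v a)"
    by (simp add: y_def b_def a_def del: transpose_matrix_vector) (metis inner_commute inner_mv_transpose)
  have e6: "inner (a + b) (S *v (a + b)) = inner a (S *v a) + 2 * inner b (S *v a) + inner b (S *v b)"
    using inner_sym_mat[OF Ss, of a b]
    by (simp add: matrix_vector_right_distrib inner_add_left inner_add_right)
  show ?thesis
    unfolding R_def[symmetric] a_def[symmetric] b_def[symmetric] k_def[symmetric]
    using e1 e2 e3 e4 e5 e6
    by (simp add: matrix_vector_mult_add_rdistrib inner_add_right power2_norm_eq_inner del: transpose_matrix_vector)
qed

definition qf :: "real^'n^'n \<Rightarrow> real^'n \<Rightarrow> real" where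
  "qf S z = inner z (S *v z)"

definition Rm :: "real^'m^'n \<Rightarrow> real^'n^'n \<Rightarrow> real^'m^'m" where
  "Rm B S = mat 1 + transpose B ** S ** B"

definition Xinv :: "real^'m^'n \<Rightarrow> real^'n^'n \<Rightarrow> real^'m^'m" where
  "Xinv B S = (SOME X. Rm B S ** X = mat 1)"

definition Kg :: "real^'n^'n \<Rightarrow> real^'m^'n \<Rightarrow> real^'n^'n \<Rightarrow> real^'n^'m" where
  "Kg A B S = - (Xinv B S ** transpose B ** S ** A)"

definition ric :: "real^'n^'n \<Rightarrow> real^'m^'n \<Rightarrow> real^'n^'n \<Rightarrow> real^'n^'n" where
  "ric A B S = symm (mat 1 + transpose A ** S ** A + transpose A ** S ** B ** Kg A B S)"

primrec Pk :: "real^'n^'n \<Rightarrow> real^'m^'n \<Rightarrow> nat \<Rightarrow> real^'n^'n" where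
  "Pk A B 0 = 0"
| "Pk A B (Suc k) = ric A B (Pk A B k)"

lemma Rm_inv:
  fixes B :: "real^'m^'n" and S :: "real^'n^'n"
  assumes psd: "\<forall>x. qf S x \<ge> 0"
  shows "Rm B S ** Xinv B S = mat 1"
proof -
  have qR: "inner w (Rm B S *v w) = norm w ^ 2 + qf S (B *v w)" for w
    by (simp add: Rm_def qf_def matrix_vector_mult_add_rdistrib mvm inner_add_right power2_norm_eq_inner del: transpose_matrix_vector)
      (metis inner_commute inner_mv_transpose)
  have "inj ((*v) (Rm B S))"
  proof (rule injI)
    fix x y assume "Rm B S *v x = Rm B S *v y"
    then have "Rm B S *v (x - y) = 0" by (simp add: matrix_vector_mult_diff_distrib)
    then have "inner (x-y) (Rm B S *v (x - y)) = 0" by simp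
    then have "norm (x - y) ^ 2 + qf S (B *v (x - y)) = 0" using qR by simp
    then have "norm (x - y) ^ 2 = 0" using psd[rule_format, of "B *v (x - y)"] by (smt (verit) zero_le_power2)
    then show "x = y" by simp
  qed
  then obtain X where "X ** Rm B S = mat 1" using matrix_left_invertible_injective by blast
  then have "Rm B S ** X = mat 1" using matrix_left_right_inverse by blast
  then show ?thesis unfolding Xinv_def by (rule someI)
qed

lemma ric_props:
  fixes A :: "real^'n^'n" and B :: "real^'m^'n" and S :: "real^'n^'n"
  assumes Ss: "transpose S = S" and psd: "\<forall>x. qf S x \<ge> 0"
  shows "qf (ric A B S) z \<le> norm z^2 + norm v^2 + qf S (A*v z + B*v v)"
    and "qf (ric A B S) z = norm z^2 + norm (Kg A B S *v z)^2 + qf S (A*v z + B*v (Kg A B S *v z))"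
proof -
  have RX: "(mat 1 + transpose B ** S ** B) ** Xinv B S = mat 1"
    using Rm_inv[OF psd] unfolding Rm_def .
  note id = riccati_identity[OF Ss RX, of z _ A, folded Kg_def]
  have qR: "inner w (Rm B S *v w) \<ge> 0" for w
  proof -
    have "inner w (Rm B S *v w) = norm w ^ 2 + qf S (B *v w)"
    by (simp add: Rm_def qf_def matrix_vector_mult_add_rdistrib mvm inner_add_right power2_norm_eq_inner del: transpose_matrix_vector)
      (metis inner_commute inner_mv_transpose)
    then show ?thesis using psd by (smt (verit) zero_le_power2)
  qed
  show "qf (ric A B S) z \<le> norm z^2 + norm v^2 + qf S (A*v z + B*v v)"
    using id[of v] qR[of "v - Kg A B S *v z"] unfolding qf_def ric_def qf_symm Rm_def by linarith
  show "qf (ric A B S) z = norm z^2 + norm (Kg A B S *v z)^2 + qf S (A*v z + B*v (Kg A B S *v z))"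
    using id[of "Kg A B S *v z"] unfolding qf_def ric_def qf_symm Rm_def by simp
qed

lemma Pk_sym: "transpose (Pk A B k) = Pk A B k"
  by (cases k) (simp add: transpose_def vec_eq_iff, simp add: ric_def symm_sym)

lemma Pk_psd: "qf (Pk A B k) z \<ge> 0"
proof (induction k arbitrary: z)
  case 0 then show ?case by (simp add: qf_def)
next
  case (Suc k)
  have "\<forall>x. qf (Pk A B k) x \<ge> 0" using Suc by blast
  from ric_props(2)[where A=A and B=B and S="Pk A B k" and z=z, OF Pk_sym this] show ?case using Suc by (simp add: add_nonneg_nonneg)
qed

lemma ricP1: "qf (Pk A B (Suc k)) z \<le> norm z^2 + norm v^2 + qf (Pk A B k) (A*v z + B*v v)"
  using ric_props(1)[where A=A and B=B and S="Pk A B k" and z=z and v=v, OF Pk_sym, OF allI[OF Pk_psd]] Pk_psd by simp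

lemma ricP2: "qf (Pk A B (Suc k)) z = norm z^2 + norm (Kg A B (Pk A B k) *v z)^2 + qf (Pk A B k) (A*v z + B*v (Kg A B (Pk A B k) *v z))"
  using ric_props(2)[where A=A and B=B and S="Pk A B k" and z=z, OF Pk_sym, OF allI[OF Pk_psd]] Pk_psd by simp

lemma Pk_ge: "qf (Pk A B (Suc k)) z \<ge> norm z ^ 2"
  using ricP2[of A B k z] Pk_psd[of A B k] by simp

lemma Pk_mono: "qf (Pk A B k) z \<le> qf (Pk A B (Suc k)) z"
proof (induction k arbitrary: z)
  case 0 then show ?case using Pk_psd[of A B "Suc 0"] by (simp add: qf_def)
next
  case (Suc k)
  define v where "v = Kg A B (Pk A B (Suc k)) *v z"
  have "qf (Pk A B (Suc k)) z \<le> norm z^2 + norm v^2 + qf (Pk A B k) (A*v z + B*v v)"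
    using ricP1 by blast
  also have "\<dots> \<le> norm z^2 + norm v^2 + qf (Pk A B (Suc k)) (A*v z + B*v v)"
    using Suc by simp
  also have "\<dots> = qf (Pk A B (Suc (Suc k))) z"
    using ricP2[of A B "Suc k" z] by (simp add: v_def)
  finally show ?case .
qed

primrec traj :: "real^'n^'n \<Rightarrow> real^'m^'n \<Rightarrow> real^'n \<Rightarrow> (nat \<Rightarrow> real^'m) \<Rightarrow> nat \<Rightarrow> real^'n" where
  "traj A B z v 0 = z"
| "traj A B z v (Suc t) = A *v traj A B z v t + B *v v t"

lemma traj_shift: "traj A B z v (Suc t) = traj A B (A *v z + B *v v 0) (\<lambda>t. v (Suc t)) t"
  by (induction t) simp_all

lemma Pk_cost: "qf (Pk A B k) z \<le> (\<Sum>t<k. norm (traj A B z v t)^2 + norm (v t)^2)"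
proof (induction k arbitrary: z v)
  case 0 then show ?case by (simp add: qf_def)
next
  case (Suc k)
  have "qf (Pk A B (Suc k)) z \<le> norm z^2 + norm (v 0)^2 + qf (Pk A B k) (A*v z + B*v v 0)"
    using ricP1 by blast
  also have "\<dots> \<le> norm z^2 + norm (v 0)^2 + (\<Sum>t<k. norm (traj A B (A*v z + B*v v 0) (\<lambda>t. v (Suc t)) t)^2 + norm (v (Suc t))^2)"
    using Suc[of "A*v z + B*v v 0" "\<lambda>t. v (Suc t)"] by simp
  also have "\<dots> = (\<Sum>t<Suc k. norm (traj A B z v t)^2 + norm (v t)^2)"
    by (subst sum.lessThan_Suc_shift) (simp add: traj_shift del: traj.simps(2) sum.lessThan_Suc)
  finally show ?case .
qed


lemma qf_lin: "qf P (x + y) = qf P x + qf P y + inner x (P *v y) + inner y (P *v x)"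
  by (simp add: qf_def matrix_vector_right_distrib inner_add_left inner_add_right)

lemma qf_scale: "qf P (c *\<^sub>R x) = c^2 * qf P x"
  by (simp add: qf_def matrix_vector_mult_scaleR power2_eq_square)

lemma lyap_schur:
  fixes F P :: "real^'n^'n"
  assumes Ps: "transpose P = P" and dec: "\<forall>z. qf P (F *v z) \<le> qf P z - norm z^2 / 2"
    and psd: "\<forall>z. qf P z \<ge> 0"
  shows "schur_stable F"
  unfolding schur_stable_def
proof (intro allI impI)
  fix ev :: complex and v :: "complex^'n"
  assume H: "v \<noteq> 0 \<and> complexify F *v v = ev *s v"
  define a where "a = (\<chi> i. Re (v$i))"
  define b where "b = (\<chi> i. Im (v$i))"
  define \<alpha> where "\<alpha> = Re ev"
  define \<beta> where "\<beta> = Im ev"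
  have "(complexify F *v v)$i = (ev *s v)$i" for i using H by simp
  then have comp: "(\<Sum>j\<in>UNIV. complex_of_real (F$i$j) * v$j) = ev * v$i" for i
    by (simp add: complexify_def matrix_vector_mult_def)
  have Fa: "F *v a = \<alpha> *\<^sub>R a - \<beta> *\<^sub>R b"
  proof -
    have "(F *v a)$i = (\<alpha> *\<^sub>R a - \<beta> *\<^sub>R b)$i" for i
      using arg_cong[OF comp[of i], of Re]
      by (simp add: matrix_vector_mult_def a_def b_def \<alpha>_def \<beta>_def Re_sum)
    then show ?thesis by (simp add: vec_eq_iff)
  qed
  have Fb: "F *v b = \<beta> *\<^sub>R a + \<alpha> *\<^sub>R b"
  proof -
    have "(F *v b)$i = (\<beta> *\<^sub>R a + \<alpha> *\<^sub>R b)$i" for i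
      using arg_cong[OF comp[of i], of Im]
      by (simp add: matrix_vector_mult_def a_def b_def \<alpha>_def \<beta>_def Im_sum algebra_simps)
    then show ?thesis by (simp add: vec_eq_iff)
  qed
  have sy: "inner x (P *v y) = inner y (P *v x)" for x y using inner_sym_mat[OF Ps] .
  have sum2: "qf P (F *v a) + qf P (F *v b) = (\<alpha>^2 + \<beta>^2) * (qf P a + qf P b)"
    unfolding Fa Fb diff_conv_add_uminus
    using sy[of a b]
    by (simp add: qf_lin qf_scale matrix_vector_mult_scaleR mv_uminus_right algebra_simps
        flip: scaleR_minus_left)
  have abnz: "norm a ^2 + norm b^2 > 0"
  proof (rule ccontr)
    assume "\<not> ?thesis"
    then have "a = 0" "b = 0" by (smt (verit) norm_eq_zero zero_le_power2 zero_less_power2)+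
    then have "v = 0" by (simp add: a_def b_def vec_eq_iff complex_eq_iff)
    then show False using H by simp
  qed
  have "(\<alpha>^2 + \<beta>^2) * (qf P a + qf P b) \<le> qf P a + qf P b - norm a^2/2 - norm b^2/2"
    using dec[rule_format, of a] dec[rule_format, of b] sum2 by linarith
  moreover have "qf P a + qf P b \<ge> 0" using psd by (simp add: add_nonneg_nonneg)
  ultimately have "\<alpha>^2 + \<beta>^2 < 1"
  proof -
    assume h1: "(\<alpha>^2 + \<beta>^2) * (qf P a + qf P b) \<le> qf P a + qf P b - norm a^2/2 - norm b^2/2"
      and h2: "qf P a + qf P b \<ge> 0"
    show ?thesis
    proof (rule ccontr)
      assume "\<not> ?thesis"
      then have "(qf P a + qf P b) \<le> (\<alpha>^2 + \<beta>^2) * (qf P a + qf P b)"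
        using h2 mult_right_mono[of 1 "\<alpha>^2 + \<beta>^2" "qf P a + qf P b"] by simp
      then show False using h1 abnz by linarith
    qed
  qed
  then have "cmod ev ^2 < 1" by (simp add: \<alpha>_def \<beta>_def cmod_power2)
  then show "cmod ev < 1" by (smt (verit) one_le_power)
qed

lemma mv_axis: "((D::real^'n^'m) *v axis j 1)$i = D$i$j"
proof -
  have e: "(\<lambda>k. D$i$k * (if k = j then 1 else 0)) = (\<lambda>k. if k = j then D$i$k else 0)" by auto
  have "(\<Sum>k\<in>UNIV. D$i$k * (if k = j then 1 else 0)) = D$i$j" by (subst e) simp
  then show ?thesis by (simp add: matrix_vector_mult_def axis_def del: mult_if_delta)
qed

lemma qf_axis: "qf D (axis i 1) = D$i$i"
  by (simp add: qf_def inner_axis' mv_axis)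

lemma qf_expand: "qf (D::real^'n^'n) z = (\<Sum>i\<in>UNIV. \<Sum>j\<in>UNIV. z$i * z$j * D$i$j)"
  by (simp add: qf_def inner_vec_def matrix_vector_mult_def sum_distrib_left mult.commute mult.left_commute)

lemma psd_bound:
  fixes D :: "real^'n^'n"
  assumes Ds: "transpose D = D" and psd: "\<forall>z. qf D z \<ge> 0"
  shows "qf D z \<le> real CARD('n) * (\<Sum>i\<in>UNIV. qf D (axis i 1)) * norm z^2"
proof -
  define d where "d i = D$i$i" for i
  have dnn: "d i \<ge> 0" for i using psd qf_axis d_def by metis
  have sy: "D$i$j = D$j$i" for i j using Ds by (metis transpose_def vec_lambda_beta)
  have bij: "\<bar>D$i$j\<bar> \<le> (d i + d j)/2" for i j
  proof -
    have p: "qf D (axis i 1 + axis j 1) = d i + d j + 2 * D$i$j"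
      by (simp add: qf_lin qf_axis d_def inner_axis' mv_axis sy[of j i])
    have m: "qf D (axis i 1 + (- axis j 1)) = d i + d j - 2 * D$i$j"
      by (simp add: qf_def d_def matrix_vector_mult_diff_distrib inner_diff_left inner_diff_right inner_axis' mv_axis sy[of j i])
    show ?thesis using psd[rule_format, of "axis i 1 + axis j 1"] psd[rule_format, of "axis i 1 + (- axis j 1)"] p m
      by (simp add: abs_le_iff)
  qed
  have "qf D z \<le> (\<Sum>i\<in>UNIV. \<Sum>j\<in>UNIV. norm z^2 * ((d i + d j)/2))"
    unfolding qf_expand
  proof (intro sum_mono)
    fix i j
    have "z$i * z$j * D$i$j \<le> \<bar>z$i\<bar> * \<bar>z$j\<bar> * \<bar>D$i$j\<bar>" by (simp add: abs_mult[symmetric])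
    also have "\<dots> \<le> norm z * norm z * ((d i + d j)/2)"
      by (intro mult_mono component_le_norm_cart bij) (auto simp: mult_nonneg_nonneg)
    finally show "z$i * z$j * D$i$j \<le> norm z^2 * ((d i + d j)/2)" by (simp add: power2_eq_square)
  qed
  also have "\<dots> = norm z^2 * real CARD('n) * (\<Sum>i\<in>UNIV. d i)"
    by (simp add: sum_distrib_left[symmetric] sum.distrib add_divide_distrib sum_divide_distrib[symmetric] card_UNIV_def)
  finally show ?thesis by (simp add: qf_axis d_def mult.commute mult.left_commute)
qed


lemma qf_diff: "qf (M - N) z = qf M z - qf N z"
  by (simp add: qf_def matrix_vector_mult_diff_rdistrib inner_diff_right)

lemma transpose_diff': "transpose ((M::real^'n^'m) - N) = transpose M - transpose N"
  by (simp add: transpose_def vec_eq_iff)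

lemma stab_from_cost:
  fixes A :: "real^'n^'n" and B :: "real^'m^'n"
  assumes cost: "\<forall>z. \<exists>v. \<forall>k. (\<Sum>t<k. norm (traj A B z v t)^2 + norm (v t)^2) \<le> c * norm z^2"
  shows "stabilizable A B"
proof -
  define P where "P = Pk A B"
  have bnd: "qf (P k) z \<le> c * norm z^2" for k z
  proof -
    obtain v where "\<forall>k. (\<Sum>t<k. norm (traj A B z v t)^2 + norm (v t)^2) \<le> c * norm z^2"
      using cost by blast
    then show ?thesis using Pk_cost[of A B k z v] unfolding P_def by (meson order_trans)
  qed
  define tr where "tr k = (\<Sum>i\<in>UNIV. qf (P k) (axis i 1))" for k
  define n where "n = real CARD('n)"
  have npos: "n > 0" unfolding n_def by simp
  define \<epsilon> where "\<epsilon> = 1 / (2 * n)"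
  have epos: "\<epsilon> > 0" using npos by (simp add: \<epsilon>_def)
  have trb: "tr k \<le> n * c" for k
  proof -
    have "tr k \<le> (\<Sum>i\<in>(UNIV::'n set). c)"
      unfolding tr_def using bnd[of k] by (intro sum_mono) (metis mult.right_neutral norm_axis_1 power_one)
    then show ?thesis by (simp add: n_def)
  qed
  have trmono: "tr k \<le> tr (Suc k)" for k
    unfolding tr_def P_def by (intro sum_mono Pk_mono)
  obtain k where k: "tr (Suc (Suc k)) - tr (Suc k) \<le> \<epsilon>"
  proof (rule ccontr)
    assume "\<not> thesis"
    then have H: "tr (Suc (Suc k)) - tr (Suc k) > \<epsilon>" for k using that \<open>\<not> thesis\<close> by (meson not_le)
    have grow: "tr (Suc k) \<ge> tr (Suc 0) + real k * \<epsilon>" for k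
    proof (induction k)
      case 0 then show ?case by simp
    next
      case (Suc k) then show ?case using H[of k] by (simp add: algebra_simps)
    qed
    have tr1: "tr (Suc 0) \<ge> 0" unfolding tr_def P_def by (intro sum_nonneg Pk_psd)
    obtain m :: nat where "real m > (n * c) / \<epsilon>" using reals_Archimedean2 by blast
    then have "real m * \<epsilon> > n * c" using epos by (simp add: field_simps)
    then show False using grow[of m] tr1 trb[of "Suc m"] by linarith
  qed
  define S where "S = P (Suc k)"
  define S' where "S' = P (Suc (Suc k))"
  define K where "K = Kg A B S"
  have Dsym: "transpose (S' - S) = S' - S"
    unfolding S_def S'_def P_def transpose_diff' Pk_sym ..
  have Dpsd: "\<forall>z. qf (S' - S) z \<ge> 0"
    unfolding qf_diff S_def S'_def P_def using Pk_mono[of A B "Suc k"] by (simp only: diff_ge_0_iff_ge) blast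
  have Dtr: "(\<Sum>i\<in>UNIV. qf (S' - S) (axis i 1)) = tr (Suc (Suc k)) - tr (Suc k)"
    unfolding qf_diff tr_def S_def S'_def by (simp add: sum_subtractf)
  have Db: "qf (S' - S) z \<le> norm z^2 / 2" for z
  proof -
    have "qf (S' - S) z \<le> n * (tr (Suc (Suc k)) - tr (Suc k)) * norm z^2"
      using psd_bound[OF Dsym Dpsd, of z] Dtr n_def by simp
    also have "\<dots> \<le> n * \<epsilon> * norm z^2"
      using k npos by (intro mult_right_mono mult_left_mono) auto
    also have "\<dots> = norm z^2 / 2" using npos by (simp add: \<epsilon>_def)
    finally show ?thesis .
  qed
  have dec: "\<forall>z. qf S ((A + B ** K) *v z) \<le> qf S z - norm z^2 / 2"
  proof
    fix z
    have e: "qf S' z = norm z^2 + norm (K *v z)^2 + qf S (A*v z + B*v (K *v z))"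
      using ricP2[of A B "Suc k" z] unfolding S_def S'_def K_def P_def by simp
    have "(A + B ** K) *v z = A*v z + B*v (K *v z)" by (simp add: matrix_vector_mult_add_rdistrib mvm)
    then have "qf S ((A + B ** K) *v z) = qf S (A*v z + B*v (K *v z))" by simp
    then show "qf S ((A + B ** K) *v z) \<le> qf S z - norm z^2 / 2"
      using e Db[of z] zero_le_power2[of "norm (K *v z)"] unfolding qf_diff by linarith
  qed
  have "schur_stable (A + B ** K)"
    unfolding S_def P_def by (rule lyap_schur[OF Pk_sym dec[unfolded S_def P_def]]) (intro allI Pk_psd)
  then show ?thesis unfolding stabilizable_def by blast
qed


lemma mv_sum: "(M::real^'n^'m) *v (\<Sum>i\<in>I. f i) = (\<Sum>i\<in>I. M *v f i)"
  by (rule linear_sum[OF matrix_vector_mul_linear])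

lemma traj_lin: "traj A B (\<Sum>i\<in>I. c i *\<^sub>R z i) (\<lambda>t. \<Sum>i\<in>I. c i *\<^sub>R v i t) t
   = (\<Sum>i\<in>I. c i *\<^sub>R traj A B (z i) (v i) t)"
  by (induction t) (simp_all add: mv_sum matrix_vector_mult_scaleR sum.distrib scaleR_add_right)

lemma norm_lin_bound:
  fixes f :: "'n::finite \<Rightarrow> 'a::real_normed_vector"
  shows "norm (\<Sum>i\<in>UNIV. (2 * z$i) *\<^sub>R f i) \<le> norm (z::real^'n) * (\<Sum>i\<in>UNIV. 2 * norm (f i))"
proof -
  have "norm (\<Sum>i\<in>UNIV. (2 * z$i) *\<^sub>R f i) \<le> (\<Sum>i\<in>UNIV. norm ((2 * z$i) *\<^sub>R f i))"
    by (rule norm_sum)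
  also have "\<dots> \<le> (\<Sum>i\<in>UNIV. norm z * (2 * norm (f i)))"
  proof (intro sum_mono)
    fix i
    have "\<bar>z$i\<bar> * norm (f i) \<le> norm z * norm (f i)"
      by (intro mult_right_mono component_le_norm_cart) auto
    then show "norm ((2 * z$i) *\<^sub>R f i) \<le> norm z * (2 * norm (f i))"
      by (simp add: abs_mult)
  qed
  finally show ?thesis by (simp add: sum_distrib_left)
qed

lemma cost_from_conv:
  fixes A :: "real^'n^'n" and B :: "real^'m^'n"
  assumes conv: "\<forall>i. \<exists>v. (\<lambda>t. traj A B ((1/2) *\<^sub>R axis i 1) v t) \<longlonglongrightarrow> 0"
  shows "\<exists>c. \<forall>z. \<exists>v. \<forall>k. (\<Sum>t<k. norm (traj A B z v t)^2 + norm (v t)^2) \<le> c * norm z^2"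
proof -
  obtain V where V: "\<And>i. (\<lambda>t. traj A B ((1/2) *\<^sub>R axis i 1) (V i) t) \<longlonglongrightarrow> 0"
    using conv by metis
  define E where "E i t = traj A B ((1/2) *\<^sub>R axis i 1) (V i) t" for i t
  define n where "n = real CARD('n)"
  have npos: "n > 0" unfolding n_def by simp
  define \<delta> where "\<delta> = 1 / (4 * n)"
  have dpos: "\<delta> > 0" using npos by (simp add: \<delta>_def)
  have ev: "\<forall>\<^sub>F t in sequentially. \<forall>i. norm (E i t) \<le> \<delta>"
  proof (rule eventually_all_finite)
    fix i
    have "\<forall>\<^sub>F t in sequentially. norm (E i t) < \<delta>"
    proof -
      have "(\<lambda>t. norm (E i t)) \<longlonglongrightarrow> 0" using V[of i] unfolding E_def by (rule tendsto_norm_zero)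
      from order_tendstoD(2)[OF this dpos] show ?thesis .
    qed
    then show "\<forall>\<^sub>F t in sequentially. norm (E i t) \<le> \<delta>" by (auto elim: eventually_mono)
  qed
  then obtain T where T: "\<forall>i. norm (E i T) \<le> \<delta>" and T1: "T \<ge> 1"
    using eventually_conj[OF ev eventually_ge_at_top[of "1::nat"]]
    by (metis (mono_tags, lifting) eventually_sequentially order_refl)
  define ctrl where "ctrl z t = (\<Sum>i\<in>UNIV. (2 * z$i) *\<^sub>R V i t)" for z :: "real^'n" and t
  define st where "st z t = (\<Sum>i\<in>UNIV. (2 * z$i) *\<^sub>R E i t)" for z :: "real^'n" and t
  have zexp: "z = (\<Sum>i\<in>UNIV. (2 * z$i) *\<^sub>R ((1/2) *\<^sub>R axis i (1::real)))" for z :: "real^'n"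
    using basis_expansion[of z] by (simp add: scalar_mult_eq_scaleR)
  have st_traj: "traj A B z (ctrl z) t = st z t" for z t
    unfolding ctrl_def st_def E_def
    by (subst zexp[of z]) (rule traj_lin)
  define \<Phi> where "\<Phi> z = st z T" for z
  have \<Phi>_bound: "norm (\<Phi> z) \<le> norm z / 2" for z
  proof -
    have "norm (\<Phi> z) \<le> norm z * (\<Sum>i\<in>UNIV. 2 * norm (E i T))"
      unfolding \<Phi>_def st_def by (rule norm_lin_bound)
    also have "\<dots> \<le> norm z * (\<Sum>i\<in>(UNIV::'n set). 2 * \<delta>)"
      using T by (intro mult_left_mono sum_mono) auto
    also have "\<dots> = norm z / 2" using npos by (simp add: \<delta>_def n_def)
    finally show ?thesis .
  qed
  define M0 where "M0 = (\<Sum>t<T. \<Sum>i\<in>UNIV. 2 * (norm (E i t) + norm (V i t)))"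
  have stb: "norm (st z t) \<le> norm z * M0" and ctb: "norm (ctrl z t) \<le> norm z * M0" if "t < T" for z t
  proof -
    have le: "(\<Sum>i\<in>UNIV. 2 * norm (E i t)) \<le> M0" "(\<Sum>i\<in>UNIV. 2 * norm (V i t)) \<le> M0"
    proof -
      have "(\<Sum>i\<in>UNIV. 2 * norm (E i t)) \<le> (\<Sum>i\<in>UNIV. 2 * (norm (E i t) + norm (V i t)))"
        by (intro sum_mono) auto
      also have "\<dots> \<le> M0" unfolding M0_def
        using that by (intro member_le_sum) (auto intro: sum_nonneg)
      finally show "(\<Sum>i\<in>UNIV. 2 * norm (E i t)) \<le> M0" .
      have "(\<Sum>i\<in>UNIV. 2 * norm (V i t)) \<le> (\<Sum>i\<in>UNIV. 2 * (norm (E i t) + norm (V i t)))"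
        by (intro sum_mono) auto
      also have "\<dots> \<le> M0" unfolding M0_def
        using that by (intro member_le_sum) (auto intro: sum_nonneg)
      finally show "(\<Sum>i\<in>UNIV. 2 * norm (V i t)) \<le> M0" .
    qed
    show "norm (st z t) \<le> norm z * M0"
      unfolding st_def using norm_lin_bound[of z "\<lambda>i. E i t"] le(1)
      by (meson mult_left_mono norm_ge_zero order_trans)
    show "norm (ctrl z t) \<le> norm z * M0"
      unfolding ctrl_def using norm_lin_bound[of z "\<lambda>i. V i t"] le(2)
      by (meson mult_left_mono norm_ge_zero order_trans)
  qed
  define M where "M = 2 * real T * M0^2"
  have block: "(\<Sum>t<T. norm (st z t)^2 + norm (ctrl z t)^2) \<le> M * norm z^2" for z
  proof -
    have "(\<Sum>t<T. norm (st z t)^2 + norm (ctrl z t)^2) \<le> (\<Sum>t<T. 2 * (norm z * M0)^2)"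
    proof (intro sum_mono)
      fix t assume "t \<in> {..<T}"
      then have "t < T" by simp
      then have "norm (st z t)^2 \<le> (norm z * M0)^2" "norm (ctrl z t)^2 \<le> (norm z * M0)^2"
        using stb ctb by (auto intro!: power_mono)
      then show "norm (st z t)^2 + norm (ctrl z t)^2 \<le> 2 * (norm z * M0)^2" by simp
    qed
    also have "\<dots> = M * norm z^2" by (simp add: M_def power_mult_distrib)
    finally show ?thesis .
  qed
  have st0: "st z 0 = z" for z using st_traj[of z 0] by simp
  have stS: "st z (Suc r) = A *v st z r + B *v ctrl z r" for z r
    using st_traj[of z "Suc r"] st_traj[of z r] by simp
  define w where "w z t = ctrl ((\<Phi>^^(t div T)) z) (t mod T)" for z t
  have wtraj: "traj A B z (w z) t = st ((\<Phi>^^(t div T)) z) (t mod T)" for z t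
  proof (induction t)
    case 0 then show ?case by (simp add: st0)
  next
    case (Suc t)
    define y where "y = (\<Phi>^^(t div T)) z"
    have "traj A B z (w z) (Suc t) = st y (Suc (t mod T))"
      unfolding traj.simps Suc.IH by (simp add: stS w_def y_def)
    moreover have "st y (Suc (t mod T)) = st ((\<Phi>^^(Suc t div T)) z) (Suc t mod T)"
    proof (cases "Suc (t mod T) = T")
      case True
      then show ?thesis by (simp add: mod_Suc div_Suc y_def st0 \<Phi>_def)
    next
      case False
      then show ?thesis by (simp add: mod_Suc div_Suc y_def)
    qed
    ultimately show ?case by simp
  qed
  have Phin: "norm ((\<Phi>^^q) z) \<le> (1/2)^q * norm z" for q z
  proof (induction q)
    case 0 then show ?case by simp
  next
    case (Suc q)
    have "norm ((\<Phi>^^Suc q) z) \<le> norm ((\<Phi>^^q) z) / 2" using \<Phi>_bound by simp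
    then show ?case using Suc by simp
  qed
  have M0nn: "M0 \<ge> 0" unfolding M0_def by (intro sum_nonneg) auto
  have Mnn: "M \<ge> 0" unfolding M_def using M0nn by simp
  have "\<forall>z. \<forall>k. (\<Sum>t<k. norm (traj A B z (w z) t)^2 + norm (w z t)^2) \<le> (2 * M) * norm z^2"
  proof (intro allI)
    fix z k
    define c where "c t = norm (traj A B z (w z) t)^2 + norm (w z t)^2" for t
    have cnn: "c t \<ge> 0" for t unfolding c_def by simp
    have "(\<Sum>t<k. c t) \<le> (\<Sum>t<k*T. c t)"
      using T1 cnn by (intro sum_mono2) auto
    also have "\<dots> = (\<Sum>q<k. \<Sum>t\<in>{q*T..<q*T+T}. c t)"
      by (rule sum.nat_group[symmetric])
    also have "\<dots> \<le> (\<Sum>q<k. M * ((1/4)^q * norm z^2))"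
    proof (intro sum_mono)
      fix q
      define y where "y = (\<Phi>^^q) z"
      have "(\<Sum>t\<in>{q*T..<q*T+T}. c t) = (\<Sum>r\<in>{0..<T}. c (r + q*T))"
        using sum.shift_bounds_nat_ivl[of c 0 "q*T" T] by (simp add: add.commute)
      also have "\<dots> = (\<Sum>r<T. norm (st y r)^2 + norm (ctrl y r)^2)"
      proof (intro sum.cong)
        fix r assume "r \<in> {..<T}"
        then have r: "r < T" by simp
        then have "(r + q*T) div T = q" "(r + q*T) mod T = r" using T1 by auto
        then show "c (r + q*T) = norm (st y r)^2 + norm (ctrl y r)^2"
          unfolding c_def wtraj by (simp add: w_def y_def)
      qed (simp add: atLeast0LessThan)
      also have "\<dots> \<le> M * norm y^2" by (rule block)
      also have "\<dots> \<le> M * ((1/4)^q * norm z^2)"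
      proof -
        have "norm y^2 \<le> ((1/2)^q * norm z)^2"
          using Phin[of q z] unfolding y_def by (intro power_mono) auto
        also have "\<dots> = (1/4)^q * norm z^2" by (simp add: power_mult_distrib power_divide flip: power_mult)
          (metis power_mult power2_eq_square mult.commute numeral_times_numeral semiring_norm(12) semiring_norm(13) semiring_norm(2))
        finally show ?thesis using Mnn by (intro mult_left_mono) auto
      qed
      finally show "(\<Sum>t\<in>{q*T..<q*T+T}. c t) \<le> M * ((1/4)^q * norm z^2)" .
    qed
    also have "\<dots> = M * norm z^2 * (\<Sum>q<k. (1/4::real)^q)"
      by (simp add: sum_distrib_left mult.assoc mult.commute[of "(1/4)^_"])
    also have "\<dots> \<le> M * norm z^2 * 2"
    proof -
      have "(\<Sum>q<k. (1/4::real)^q) < 1 / (1 - 1/4)" by (rule geometric_sum_less) auto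
      then have "(\<Sum>q<k. (1/4::real)^q) \<le> 2" by simp
      then show ?thesis using Mnn by (intro mult_left_mono) auto
    qed
    finally show "(\<Sum>t<k. norm (traj A B z (w z) t)^2 + norm (w z t)^2) \<le> (2 * M) * norm z^2"
      unfolding c_def by simp
  qed
  then show ?thesis by blast
qed


lemma closed_loop_exists:
  fixes A :: "real^'n^'n" and B :: "real^'m^'n" and C :: "real^'n^'p"
    and a :: "'N::finite \<Rightarrow> 'N \<Rightarrow> real" and G :: "real^'p^'n" and K :: "real^'n^'m"
    and x0 :: "'N \<Rightarrow> real^'n"
  shows "\<exists>x xh uh s su xd ud u. closed_loop A B C a \<gamma> \<alpha> \<alpha>u L Lu G K x xh uh s su xd ud u
           \<and> x 0 = x0 \<and> xh 0 = (\<lambda>_. 0) \<and> uh 0 = (\<lambda>_. 0)"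
proof -
  define uf where "uf Xh i = K *v (\<Sum>j\<in>{j. a i j > 0}. a i j *\<^sub>R (Xh j - Xh i))"
    for Xh :: "'N \<Rightarrow> real^'n" and i
  define step where "step t (st :: ('N \<Rightarrow> real^'n) \<times> ('N \<Rightarrow> real^'n) \<times> ('N \<Rightarrow> real^'m)) =
    (let X = fst st; Xh = fst (snd st); Uh = snd (snd st);
       s = (\<lambda>j. vquant \<alpha> L ((1 / \<gamma> ^ t) *\<^sub>R (C *v X j - C *v Xh j)));
       Xh' = (\<lambda>j. A *v Xh j + (\<gamma> ^ t) *\<^sub>R (G *v s j) + B *v Uh j);
       su = (\<lambda>j. vquant \<alpha>u Lu ((1 / \<gamma> ^ t) *\<^sub>R (uf Xh' j - Uh j)));
       Uh' = (\<lambda>j. Uh j + (\<gamma> ^ t) *\<^sub>R su j);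
       X' = (\<lambda>i. A *v X i + B *v uf Xh i)
     in (X', Xh', Uh'))" for t st
  define st where "st = rec_nat (x0, (\<lambda>_. 0), (\<lambda>_. 0)) step"
  define x where "x t = fst (st t)" for t
  define xh where "xh t = fst (snd (st t))" for t
  define uh where "uh t = snd (snd (st t))" for t
  define s where "s t j = (case t of 0 \<Rightarrow> 0 | Suc t' \<Rightarrow> vquant \<alpha> L ((1 / \<gamma> ^ t') *\<^sub>R (C *v x t' j - C *v xh t' j)))" for t j
  define su where "su t j = (case t of 0 \<Rightarrow> 0 | Suc t' \<Rightarrow> vquant \<alpha>u Lu ((1 / \<gamma> ^ t') *\<^sub>R (uf (xh t) j - uh t' j)))" for t j
  define xd where "xd t (i::'N) j = xh t j" for t i j
  define ud where "ud t (i::'N) j = uh t j" for t i j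
  define u where "u t i = uf (xh t) i" for t i
  have stS: "st (Suc t) = step t (st t)" for t by (simp add: st_def)
  have x0: "x 0 = x0" "xh 0 = (\<lambda>_. 0)" "uh 0 = (\<lambda>_. 0)" by (simp_all add: x_def xh_def uh_def st_def)
  have xS: "x (Suc t) i = A *v x t i + B *v u t i" for t i
    by (simp add: x_def u_def xh_def stS step_def Let_def)
  have xhS: "xh (Suc t) j = A *v xh t j + (\<gamma> ^ t) *\<^sub>R (G *v s (Suc t) j) + B *v uh t j" for t j
    by (simp add: x_def xh_def uh_def s_def stS step_def Let_def)
  have uhS: "uh (Suc t) j = uh t j + (\<gamma> ^ t) *\<^sub>R su (Suc t) j" for t j
  proof -
    have "xh (Suc t) = (\<lambda>j. A *v xh t j + (\<gamma> ^ t) *\<^sub>R (G *v s (Suc t) j) + B *v uh t j)"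
      using xhS by blast
    then show ?thesis
      by (simp add: x_def xh_def uh_def s_def su_def stS step_def Let_def)
  qed
  have "closed_loop A B C a \<gamma> \<alpha> \<alpha>u L Lu G K x xh uh s su xd ud u"
    unfolding closed_loop_def
    by (simp add: xS xhS uhS xd_def ud_def u_def uf_def s_def su_def)
  then show ?thesis using x0 by blast
qed

theorem theorem5:
  fixes A :: "real^'n^'n" and B :: "real^'m^'n" and C :: "real^'n^'p"
    and a :: "'N::finite \<Rightarrow> 'N \<Rightarrow> real"
  assumes N2: "CARD('N) \<ge> 2"
    and adj_diag: "\<forall>i. a i i = 0"
    and adj_nonneg: "\<forall>i j. a i j \<ge> 0"
    and coop: "\<forall>Cx Cxh Cuh::real. Cx > 0 \<and> Cxh > 0 \<and> Cuh > 0 \<longrightarrow>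
      (\<exists>(\<gamma>::real) (\<alpha>::real) (\<alpha>u::real) (L::nat) (Lu::nat) (G::real^'p^'n) (K::real^'n^'m).
         0 < \<gamma> \<and> \<gamma> < 1 \<and> 0 < \<alpha> \<and> \<alpha> \<le> 1 \<and> 0 < \<alpha>u \<and> \<alpha>u \<le> 1 \<and> 0 < L \<and> 0 < Lu \<and>
         (\<forall>x xh uh s su xd ud u.
            closed_loop A B C a \<gamma> \<alpha> \<alpha>u L Lu G K x xh uh s su xd ud u \<and>
            (\<forall>i. infnorm (x 0 i) < Cx \<and> infnorm (xh 0 i) < Cxh \<and> infnorm (uh 0 i) < Cuh)
            \<longrightarrow> (\<forall>i j. (\<lambda>t. x t j - x t i) \<longlonglongrightarrow> 0)))"
  shows "stabilizable A B"
proof -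
  obtain i j :: 'N where ij: "i \<noteq> j"
  proof -
    obtain i :: 'N where True by blast
    have ce: "card (UNIV - {i}) = CARD('N) - 1" by (simp add: card_Diff_singleton)
    have "UNIV - {i} \<noteq> {}"
    proof
      assume "UNIV - {i} = {}"
      then have "CARD('N) - 1 = 0" using ce by (metis card.empty)
      then show False using N2 by simp
    qed
    then obtain j where "j \<noteq> i" by blast
    then show ?thesis using that by blast
  qed
  obtain \<gamma> \<alpha> \<alpha>u L Lu G K where H:
    "\<forall>x xh uh s su xd ud u.
            closed_loop A B C a \<gamma> \<alpha> \<alpha>u L Lu G K x xh uh s su xd ud u \<and>
            (\<forall>i. infnorm (x 0 i) < 1 \<and> infnorm (xh 0 i) < (1::real) \<and> infnorm (uh 0 i) < (1::real))
            \<longrightarrow> (\<forall>i j. (\<lambda>t. x t j - x t i) \<longlonglongrightarrow> 0)"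
  proof -
    have "(1::real) > 0 \<and> (1::real) > 0 \<and> (1::real) > 0" by simp
    from coop[rule_format, OF this] show ?thesis using that by (elim exE conjE) blast
  qed
  have conv: "\<forall>k. \<exists>v. (\<lambda>t. traj A B ((1/2) *\<^sub>R axis k 1) v t) \<longlonglongrightarrow> 0"
  proof
    fix k :: 'n
    define z :: "real^'n" where "z = (1/2) *\<^sub>R axis k 1"
    define x0 where "x0 l = (if l = j then z else 0)" for l
    obtain x xh uh s su xd ud u where cl: "closed_loop A B C a \<gamma> \<alpha> \<alpha>u L Lu G K x xh uh s su xd ud u"
      and i0: "x 0 = x0" "xh 0 = (\<lambda>_. 0)" "uh 0 = (\<lambda>_. 0)"
      using closed_loop_exists[of A B C a \<gamma> \<alpha> \<alpha>u L Lu G K x0] by blast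
    have zn: "infnorm z < 1"
      using infnorm_le_norm[of z] by (simp add: z_def)
    have "\<forall>l. infnorm (x 0 l) < 1 \<and> infnorm (xh 0 l) < (1::real) \<and> infnorm (uh 0 l) < (1::real)"
      using zn by (simp add: i0 x0_def infnorm_0)
    then have lim: "(\<lambda>t. x t j - x t i) \<longlonglongrightarrow> 0" using H cl by blast
    define v where "v t = u t j - u t i" for t
    have dyn: "x (Suc t) l = A *v x t l + B *v u t l" for t l
      using cl unfolding closed_loop_def by blast
    have "x t j - x t i = traj A B z v t" for t
    proof (induction t)
      case 0 then show ?case using ij by (simp add: i0 x0_def)
    next
      case (Suc t)
      have "x (Suc t) j - x (Suc t) i = A *v (x t j - x t i) + B *v (u t j - u t i)"
        by (simp add: dyn matrix_vector_mult_diff_distrib)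
      then show ?case using Suc by (simp add: v_def)
    qed
    then have "(\<lambda>t. traj A B z v t) \<longlonglongrightarrow> 0" using lim by simp
    then show "\<exists>v. (\<lambda>t. traj A B ((1/2) *\<^sub>R axis k 1) v t) \<longlonglongrightarrow> 0" unfolding z_def by blast
  qed
  obtain c where "\<forall>z. \<exists>v. \<forall>k. (\<Sum>t<k. norm (traj A B z v t)^2 + norm (v t)^2) \<le> c * norm z^2"
    using cost_from_conv[OF conv] by blast
  then show ?thesis by (rule stab_from_cost)
qed

end
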